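(* Let $X$ be an $X$-set parameter, let $G$ be a graph, and let $R\subseteq V(G)$. Then the map $\nu_R$, $\nu_R(S)=S\ominus R$, is a graph automorphism of $\mathscr{X}^{\rm TAR}(G)$ if and only if $R$ is $X$-irrelevant.
   Context: All graphs are simple, finite, with nonempty vertex set. An $X$-set parameter is a graph parameter $X(G)$ defined as the minimum cardinality of an $X$-set of $G$, where the $X$-sets of each graph are subsets of its vertex set determined by some property satisfying: (1) supersets (within $V(G)$) of $X$-sets are $X$-sets; (2) the empty set is never an $X$-set; (3) an $X$-set of a disconnected graph is the union of an $X$-set of each component; (4) if $G$ has no isolated vertices, every set of $|V(G)|-1$ vertices is an $X$-set. The $X$-TAR graph $\mathscr{X}^{\rm TAR}(G)$ has as vertices all $X$-sets of $G$, with $S_1,S_2$ adjacent iff $|S_1\ominus S_2|=1$ (symmetric difference). The map $\nu_R$ is defined on the vertices of $\mathscr{X}^{\rm TAR}(G)$ with values in the power set of $V(G)$. A vertex $v$ of $G$ is $X$-irrelevant if $v\notin S$ for every minimal $X$-set $S$ of $G$; a set $R$ is $X$-irrelevant if all its vertices are $X$-irrelevant. *)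

theory Defs
  imports Main
begin

type_synonym 'a graph = "'a set \<times> 'a set set"

abbreviation verts :: "'a graph \<Rightarrow> 'a set" where "verts G \<equiv> fst G"
abbreviation edges :: "'a graph \<Rightarrow> 'a set set" where "edges G \<equiv> snd G"

definition is_graph :: "'a graph \<Rightarrow> bool" where
  "is_graph G \<longleftrightarrow> finite (verts G) \<and> verts G \<noteq> {} \<and>
     (\<forall>e\<in>edges G. \<exists>u v. e = {u, v} \<and> u \<noteq> v \<and> u \<in> verts G \<and> v \<in> verts G)"

definition adj_rel :: "'a graph \<Rightarrow> ('a \<times> 'a) set" where
  "adj_rel G = {(u, w). {u, w} \<in> edges G}"

definition components :: "'a graph \<Rightarrow> 'a set set" where
  "components G = {C. \<exists>v\<in>verts G. C = {w. (v, w) \<in> (adj_rel G)\<^sup>*}}"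

definition induced :: "'a graph \<Rightarrow> 'a set \<Rightarrow> 'a graph" where
  "induced G C = (C, {e\<in>edges G. e \<subseteq> C})"

definition isolated :: "'a graph \<Rightarrow> 'a \<Rightarrow> bool" where
  "isolated G v \<longleftrightarrow> v \<in> verts G \<and> (\<forall>e\<in>edges G. v \<notin> e)"

definition sym_diff :: "'a set \<Rightarrow> 'a set \<Rightarrow> 'a set" where
  "sym_diff A B = (A - B) \<union> (B - A)"

definition Xset_param :: "('a graph \<Rightarrow> 'a set \<Rightarrow> bool) \<Rightarrow> bool" where
  "Xset_param X \<longleftrightarrow>
    (\<forall>G S. is_graph G \<longrightarrow> X G S \<longrightarrow> S \<subseteq> verts G) \<and>
    (\<forall>G S T. is_graph G \<longrightarrow> X G S \<longrightarrow> S \<subseteq> T \<longrightarrow> T \<subseteq> verts G \<longrightarrow> X G T) \<and>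
    (\<forall>G. is_graph G \<longrightarrow> \<not> X G {}) \<and>
    (\<forall>G S. is_graph G \<longrightarrow> card (components G) \<ge> 2 \<longrightarrow>
        (X G S \<longleftrightarrow> S \<subseteq> verts G \<and> (\<forall>C\<in>components G. X (induced G C) (S \<inter> C)))) \<and>
    (\<forall>G S. is_graph G \<longrightarrow> (\<forall>v\<in>verts G. \<not> isolated G v) \<longrightarrow>
        S \<subseteq> verts G \<longrightarrow> card S = card (verts G) - 1 \<longrightarrow> X G S)"

definition minimal_Xset :: "('a graph \<Rightarrow> 'a set \<Rightarrow> bool) \<Rightarrow> 'a graph \<Rightarrow> 'a set \<Rightarrow> bool" where
  "minimal_Xset X G S \<longleftrightarrow> X G S \<and> (\<forall>T. T \<subset> S \<longrightarrow> \<not> X G T)"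

definition X_irrelevant_set :: "('a graph \<Rightarrow> 'a set \<Rightarrow> bool) \<Rightarrow> 'a graph \<Rightarrow> 'a set \<Rightarrow> bool" where
  "X_irrelevant_set X G R \<longleftrightarrow> (\<forall>v\<in>R. \<forall>S. minimal_Xset X G S \<longrightarrow> v \<notin> S)"

definition TAR_verts :: "('a graph \<Rightarrow> 'a set \<Rightarrow> bool) \<Rightarrow> 'a graph \<Rightarrow> 'a set set" where
  "TAR_verts X G = {S. X G S}"

definition TAR_adj :: "'a set \<Rightarrow> 'a set \<Rightarrow> bool" where
  "TAR_adj S1 S2 \<longleftrightarrow> card (sym_diff S1 S2) = 1"

definition nu :: "'a set \<Rightarrow> 'a set \<Rightarrow> 'a set" where
  "nu R S = sym_diff S R"

definition is_automorphism :: "'b set \<Rightarrow> ('b \<Rightarrow> 'b \<Rightarrow> bool) \<Rightarrow> ('b \<Rightarrow> 'b) \<Rightarrow> bool" where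
  "is_automorphism Vs adj f \<longleftrightarrow> bij_betw f Vs Vs \<and>
     (\<forall>a\<in>Vs. \<forall>b\<in>Vs. adj a b \<longleftrightarrow> adj (f a) (f b))"

end

theory Submission
  imports Defs
begin

lemma Xsub: "Xset_param X \<Longrightarrow> is_graph G \<Longrightarrow> X G S \<Longrightarrow> S \<subseteq> verts G"
proof -
  assume a: "Xset_param X" "is_graph G" "X G S"
  have h: "\<forall>G S. is_graph G \<longrightarrow> X G S \<longrightarrow> S \<subseteq> verts G"
    using a(1) unfolding Xset_param_def by (rule conjunct1)
  show ?thesis using h a(2,3) by blast
qed

lemma Xsup: "Xset_param X \<Longrightarrow> is_graph G \<Longrightarrow> X G S \<Longrightarrow> S \<subseteq> T \<Longrightarrow> T \<subseteq> verts G \<Longrightarrow> X G T"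
proof -
  assume a: "Xset_param X" "is_graph G" "X G S" "S \<subseteq> T" "T \<subseteq> verts G"
  have h: "\<forall>G S T. is_graph G \<longrightarrow> X G S \<longrightarrow> S \<subseteq> T \<longrightarrow> T \<subseteq> verts G \<longrightarrow> X G T"
    using a(1) unfolding Xset_param_def by (blast dest: conjunct2 conjunct1)
  show ?thesis using h a(2-5) by blast
qed

lemma nu_invol: "nu R (nu R S) = S"
  unfolding nu_def sym_diff_def by auto

lemma nu_adj: "TAR_adj (nu R a) (nu R b) = TAR_adj a b"
proof -
  have "sym_diff (nu R a) (nu R b) = sym_diff a b"
    unfolding nu_def sym_diff_def by auto
  thus ?thesis unfolding TAR_adj_def by simp
qed

lemma exists_minimal:
  assumes P: "Xset_param X" and g: "is_graph G" and S: "X G S"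
  shows "\<exists>M. M \<subseteq> S \<and> minimal_Xset X G M"
proof -
  have sub: "S \<subseteq> verts G" using Xsub[OF P g S] .
  have fin: "finite S" using sub g unfolding is_graph_def by (meson finite_subset)
  let ?F = "{T. T \<subseteq> S \<and> X G T}"
  have finF: "finite ?F" by (rule finite_subset[of _ "Pow S"]) (use fin in auto)
  have "S \<in> ?F" using S by simp
  then have "\<exists>m\<in>?F. m \<le> S \<and> (\<forall>b\<in>?F. b \<le> m \<longrightarrow> m = b)"
    by (rule finite_has_minimal2[OF finF])
  then obtain M where M: "M \<in> ?F" and mn0: "\<forall>b\<in>?F. b \<le> M \<longrightarrow> M = b"
    by blast
  have mn: "\<And>T. T \<in> ?F \<Longrightarrow> T \<subseteq> M \<Longrightarrow> T = M" using mn0 by blast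
  have "minimal_Xset X G M"
    unfolding minimal_Xset_def
  proof (intro conjI allI impI)
    show "X G M" using M by simp
  next
    fix T assume "T \<subset> M"
    thus "\<not> X G T" using M mn[of T] by blast
  qed
  thus ?thesis using M by blast
qed

theorem theorem2p8:
  fixes X :: "'a graph \<Rightarrow> 'a set \<Rightarrow> bool" and G :: "'a graph" and R :: "'a set"
  assumes "Xset_param X" and "is_graph G" and "R \<subseteq> verts G"
  shows "is_automorphism (TAR_verts X G) TAR_adj (nu R) \<longleftrightarrow> X_irrelevant_set X G R"
proof
  assume A: "is_automorphism (TAR_verts X G) TAR_adj (nu R)"
  hence img: "nu R ` TAR_verts X G \<subseteq> TAR_verts X G"
    unfolding is_automorphism_def bij_betw_def by blast
  show "X_irrelevant_set X G R"
    unfolding X_irrelevant_set_def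
  proof (intro ballI allI impI notI)
    fix v M assume v: "v \<in> R" and M: "minimal_Xset X G M" and vM: "v \<in> M"
    have XM: "X G M" using M unfolding minimal_Xset_def by blast
    have Msub: "M \<subseteq> verts G" using Xsub[OF assms(1,2) XM] .
    have "X G (M \<union> R)" using Xsup[OF assms(1,2) XM, of "M \<union> R"] Msub assms(3) by blast
    hence "nu R (M \<union> R) \<in> TAR_verts X G" using img unfolding TAR_verts_def by blast
    moreover have "nu R (M \<union> R) = M - R" unfolding nu_def sym_diff_def by auto
    ultimately have "X G (M - R)" unfolding TAR_verts_def by simp
    moreover have "M - R \<subset> M" using v vM by blast
    ultimately show False using M unfolding minimal_Xset_def by blast
  qed
next
  assume I: "X_irrelevant_set X G R"
  have img: "nu R ` TAR_verts X G \<subseteq> TAR_verts X G"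
  proof
    fix T assume "T \<in> nu R ` TAR_verts X G"
    then obtain S where S: "X G S" and T: "T = nu R S" unfolding TAR_verts_def by blast
    obtain M where MS: "M \<subseteq> S" and M: "minimal_Xset X G M"
      using exists_minimal[OF assms(1,2) S] by blast
    have XM: "X G M" using M unfolding minimal_Xset_def by blast
    have "M \<inter> R = {}" using I M unfolding X_irrelevant_set_def by blast
    hence "M \<subseteq> T" using MS T unfolding nu_def sym_diff_def by blast
    moreover have "S \<subseteq> verts G" using Xsub[OF assms(1,2) S] .
    hence "T \<subseteq> verts G" using T assms(3) unfolding nu_def sym_diff_def by blast
    ultimately have "X G T" using Xsup[OF assms(1,2) XM] by blast
    thus "T \<in> TAR_verts X G" unfolding TAR_verts_def by simp
  qed
  have "bij_betw (nu R) (TAR_verts X G) (TAR_verts X G)"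
    by (rule bij_betw_byWitness[where f'="nu R"]) (use img in \<open>auto simp: nu_invol\<close>)
  thus "is_automorphism (TAR_verts X G) TAR_adj (nu R)"
    unfolding is_automorphism_def using nu_adj by blast
qed

end
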